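(* Let $p$ be an odd prime and let $\chi, r \in \mathbb{F}_{p^2}^\times$ with $\chi \neq \pm 1$, where the multiplicative order of $\chi$ divides $p+1$, and the multiplicative order of $r$ divides $2(p+1)$ but does not divide $p+1$. Then there exist $b_1, b_2, k \in \mathbb{F}_p$ with $k$ a quadratic nonresidue such that $\chi - \chi^{-1} = b_1\sqrt{k}$ and $r + r^{-1} = b_2\sqrt{k}$. Moreover, with these choices of $\chi$ and $r$, the set $$\left\{ \left( \chi + \chi^{-1},\ \frac{\chi + \chi^{-1}}{\chi - \chi^{-1}}\left(r\chi^\ell + \frac{1}{r\chi^\ell}\right),\ \frac{\chi + \chi^{-1}}{\chi - \chi^{-1}}\left(r\chi^{\ell + 1} + \frac{1}{r\chi^{\ell + 1}}\right)\right) : \ell \in \mathbb{Z} \right\}$$ contains triples with all coordinates in $\mathbb{F}_p = \mathbb{Z}/p\mathbb{Z}$.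
   Context: $\sqrt{k}$ denotes a fixed square root of $k$ in $\mathbb{F}_{p^2}$, and $\mathbb{F}_p$ is regarded as the prime subfield of $\mathbb{F}_{p^2}$. *)

theory Defs
  imports Main "HOL-Computational_Algebra.Primes"
begin

definition mult_order :: "'a::field \<Rightarrow> nat" where
  "mult_order x = (if \<exists>n>0. x ^ n = 1 then (LEAST n. n > 0 \<and> x ^ n = 1) else 0)"

definition prime_subfield :: "'a::field set" where
  "prime_subfield = range of_int"

definition qnr_prime_subfield :: "'a::field \<Rightarrow> bool" where
  "qnr_prime_subfield k \<longleftrightarrow> k \<in> prime_subfield \<and> k \<noteq> 0 \<and>
     \<not> (\<exists>y\<in>prime_subfield. y ^ 2 = k)"

definition triple_set :: "'a::field \<Rightarrow> 'a \<Rightarrow> ('a \<times> 'a \<times> 'a) set" where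
  "triple_set \<chi> r =
    (\<lambda>l::int. (\<chi> + inverse \<chi>,
       (\<chi> + inverse \<chi>) / (\<chi> - inverse \<chi>) * (r * \<chi> powi l + inverse (r * \<chi> powi l)),
       (\<chi> + inverse \<chi>) / (\<chi> - inverse \<chi>) * (r * \<chi> powi (l + 1) + inverse (r * \<chi> powi (l + 1)))))
    ` UNIV"

end

theory Submission imports Defs "HOL-Computational_Algebra.Computational_Algebra" "HOL-Number_Theory.Cong" begin

lemma frob_add: "prime CHAR('a::field) \<Longrightarrow> (x + y :: 'a) ^ CHAR('a) = x ^ CHAR('a) + y ^ CHAR('a)"
  by (rule freshmans_dream) auto

lemma frob_neg: "prime CHAR('a::field) \<Longrightarrow> (- x :: 'a) ^ CHAR('a) = - (x ^ CHAR('a))"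
  by (rule minus_power_prime_CHAR) auto

lemma frob_diff: "prime CHAR('a::field) \<Longrightarrow> (x - y :: 'a) ^ CHAR('a) = x ^ CHAR('a) - y ^ CHAR('a)"
  using frob_add[of x "-y"] frob_neg[of y] by simp

lemma frob_of_nat: "prime CHAR('a::field) \<Longrightarrow> (of_nat n :: 'a) ^ CHAR('a) = of_nat n"
proof (induction n)
  case 0 then show ?case using prime_gt_0_nat by (simp add: power_0_left)
next
  case (Suc n) then show ?case using frob_add[of "of_nat n :: 'a" 1] by (simp add: add.commute)
qed

lemma frob_of_int: assumes h: "prime CHAR('a::field)" shows "(of_int i :: 'a) ^ CHAR('a) = of_int i"
proof (cases i rule: int_cases)
  case (nonneg n) then show ?thesis
    using frob_of_nat[OF h, of n] by simp
next
  case (neg n)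
  have "(of_int i :: 'a) = - of_nat (Suc n)" using neg by simp
  then show ?thesis using frob_neg[OF h, of "of_nat (Suc n)"] frob_of_nat[OF h, of "Suc n"] by metis
qed

lemma range_of_int_eq: "CHAR('a::field) > 0 \<Longrightarrow> (range of_int :: 'a set) = of_nat ` {..<CHAR('a)}"
proof safe
  fix i :: int assume h: "CHAR('a) > 0"
  have "(of_int i :: 'a) = of_int (i mod int CHAR('a))"
    by (simp add: of_int_eq_iff_cong_CHAR cong_def)
  also have "\<dots> = of_nat (nat (i mod int CHAR('a)))" using h by simp
  finally show "(of_int i :: 'a) \<in> of_nat ` {..<CHAR('a)}"
    using h by (intro image_eqI[of _ _ "nat (i mod int CHAR('a))"]) (auto simp: nat_less_iff)
next
  fix n show "(of_nat n :: 'a) \<in> range of_int" by (metis of_int_of_nat_eq rangeI)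
qed

lemma card_range_of_int: "CHAR('a::field) > 0 \<Longrightarrow> card (range of_int :: 'a set) = CHAR('a)"
proof -
  assume h: "CHAR('a) > 0"
  have "inj_on (of_nat :: nat \<Rightarrow> 'a) {..<CHAR('a)}"
    by (auto simp: inj_on_def of_nat_eq_iff_cong_CHAR cong_def)
  then show ?thesis using range_of_int_eq[OF h] by (simp add: card_image)
qed

lemma prime_subfield_iff:
  assumes "prime CHAR('a::field)"
  shows "(x :: 'a) \<in> prime_subfield \<longleftrightarrow> x ^ CHAR('a) = x"
proof
  assume "x \<in> prime_subfield" then show "x ^ CHAR('a) = x"
    using frob_of_int[OF assms] by (auto simp: prime_subfield_def)
next
  assume hx: "x ^ CHAR('a) = x"
  define P :: "'a poly" where "P = monom 1 CHAR('a) + [:0, -1:]"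
  have p2: "CHAR('a) \<ge> 2" using assms prime_ge_2_nat by blast
  have degP: "degree P = CHAR('a)" unfolding P_def using p2
    by (subst degree_add_eq_left) (auto simp: degree_monom_eq)
  hence "P \<noteq> 0" using p2 by auto
  have polyP: "poly P y = y ^ CHAR('a) - y" for y unfolding P_def by (simp add: poly_monom)
  let ?S = "{y. poly P y = 0}"
  have fin: "finite ?S" using \<open>P \<noteq> 0\<close> poly_roots_finite by blast
  have cS: "card ?S \<le> CHAR('a)" using card_poly_roots_bound[OF \<open>P \<noteq> 0\<close>] degP by simp
  have sub: "range of_int \<subseteq> ?S" using frob_of_int[OF assms] polyP by auto
  have "range of_int = ?S"
  proof (rule card_subset_eq[OF fin sub])
    have "card (range of_int :: 'a set) \<le> card ?S" by (rule card_mono[OF fin sub])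
    then show "card (range of_int :: 'a set) = card ?S"
      using card_range_of_int[where 'a='a] p2 cS by linarith
  qed
  then show "x \<in> prime_subfield" using hx polyP unfolding prime_subfield_def by auto
qed

lemma mo_pow:
  assumes "mult_order (x::'a::field) dvd m" "m > 0"
  shows "x ^ m = 1"
proof -
  have ne: "mult_order x \<noteq> 0" using assms by auto
  have ex: "\<exists>n>0. x ^ n = 1"
  proof (rule ccontr)
    assume "\<not> (\<exists>n>0. x ^ n = 1)"
    hence "mult_order x = 0" unfolding mult_order_def by (simp only: if_False)
    thus False using ne by simp
  qed
  hence "x ^ mult_order x = 1" unfolding mult_order_def using LeastI_ex[OF ex] by simp
  then obtain k where "m = mult_order x * k" using assms by (auto elim: dvdE)
  then show ?thesis using \<open>x ^ mult_order x = 1\<close> by (simp add: power_mult)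
qed

lemma mo_dvd:
  assumes "(x::'a::field) ^ n = 1" "n > 0"
  shows "mult_order x dvd n"
proof -
  have ex: "\<exists>n>0. x ^ n = 1" using assms by auto
  define m where "m = mult_order x"
  have m: "m = (LEAST n. n > 0 \<and> x ^ n = 1)" unfolding m_def mult_order_def using ex by simp
  have m1: "m > 0 \<and> x ^ m = 1" unfolding m using LeastI_ex[OF ex] by simp
  have "x ^ n = (x ^ m) ^ (n div m) * x ^ (n mod m)"
  proof -
    have "x ^ n = x ^ (m * (n div m) + n mod m)" by simp
    also have "\<dots> = (x ^ m) ^ (n div m) * x ^ (n mod m)" by (simp only: power_add power_mult)
    finally show ?thesis .
  qed
  hence xr: "x ^ (n mod m) = 1" using m1 assms by simp
  have "n mod m = 0"
  proof (rule ccontr)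
    assume "n mod m \<noteq> 0"
    hence "(LEAST n. n > 0 \<and> x ^ n = 1) \<le> n mod m" using xr by (intro Least_le) auto
    hence "m \<le> n mod m" using m by simp
    moreover have "n mod m < m" using m1 by simp
    ultimately show False by simp
  qed
  then show ?thesis unfolding m_def[symmetric] by auto
qed

theorem corollary1:
  fixes \<chi> r :: "'a::{field,finite}"
  assumes "prime (p::nat)" and "odd p"
    and "card (UNIV :: 'a set) = p ^ 2" and "CHAR('a) = p"
    and "\<chi> \<noteq> 0" and "r \<noteq> 0"
    and "\<chi> \<noteq> 1" and "\<chi> \<noteq> -1"
    and "mult_order \<chi> dvd p + 1"
    and "mult_order r dvd 2 * (p + 1)" and "\<not> mult_order r dvd p + 1"
  shows "(\<exists>b1 b2 k s. b1 \<in> prime_subfield \<and> b2 \<in> prime_subfield \<and>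
            qnr_prime_subfield k \<and> s ^ 2 = k \<and>
            \<chi> - inverse \<chi> = b1 * s \<and> r + inverse r = b2 * s)
       \<and> triple_set \<chi> r \<inter> (prime_subfield \<times> prime_subfield \<times> prime_subfield) \<noteq> {}"
proof -
  note pr = assms(1)[folded assms(4)]
  have PS: "x \<in> prime_subfield \<longleftrightarrow> x ^ p = x" for x :: 'a
    using prime_subfield_iff[OF pr] assms(4) by simp
  have add: "(x + y) ^ p = x ^ p + y ^ p" for x y :: 'a using frob_add[OF pr] assms(4) by simp
  have neg: "(- x) ^ p = - (x ^ p)" for x :: 'a using frob_neg[OF pr] assms(4) by simp
  have diff: "(x - y) ^ p = x ^ p - y ^ p" for x y :: 'a using frob_diff[OF pr] assms(4) by simp
  have two: "(2::'a) \<noteq> 0"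
  proof
    assume "(2::'a) = 0"
    hence "(of_nat 2 :: 'a) = 0" by simp
    hence "p dvd 2" using of_nat_eq_0_iff_char_dvd assms(4) by metis
    hence "p \<le> 2" by (rule dvd_imp_le) simp
    moreover have "p \<ge> 2" using assms(1) prime_ge_2_nat by blast
    ultimately have "p = 2" by simp
    thus False using assms(2) by simp
  qed
  have c1: "\<chi> ^ (p + 1) = 1" using mo_pow[OF assms(9)] by simp
  hence cp: "\<chi> ^ p = inverse \<chi>" using assms(5) by (simp add: field_simps)
  have r2: "(r ^ (p + 1)) ^ 2 = 1"
  proof -
    have "(r ^ (p + 1)) ^ 2 = r ^ (2 * (p + 1))" by (simp only: power_mult[symmetric] mult.commute)
    thus ?thesis using mo_pow[OF assms(10)] by simp
  qed
  have "r ^ (p + 1) \<noteq> 1" using mo_dvd[of r "p+1"] assms(11) by auto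
  hence "r ^ (p + 1) = -1" using r2 by (simp add: power2_eq_1_iff)
  hence rp: "r ^ p = - inverse r" using assms(6) by (simp add: field_simps)
  define d where "d = \<chi> - inverse \<chi>"
  define c where "c = \<chi> + inverse \<chi>"
  define e where "e = r + inverse r"
  define f where "f = r * \<chi> + inverse (r * \<chi>)"
  have dp: "d ^ p = - d" unfolding d_def diff cp power_inverse by (simp add: assms(5))
  have cpp: "c ^ p = c" unfolding c_def add cp power_inverse by (simp add: assms(5))
  have ep: "e ^ p = - e" unfolding e_def add rp power_inverse by (simp add: assms(6) inverse_minus_eq)
  have fp: "f ^ p = - f" unfolding f_def add power_mult_distrib rp cp power_inverse
    using assms(5,6) by (simp add: field_simps)
  have d0: "d \<noteq> 0"
  proof
    assume "d = 0"
    hence "\<chi> * \<chi> = 1" unfolding d_def using assms(5) by (simp add: field_simps)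
    hence "\<chi> ^ 2 = 1" by (simp add: power2_eq_square)
    thus False using assms(7,8) by (simp add: power2_eq_1_iff)
  qed
  have part1: "\<exists>b1 b2 k s. b1 \<in> prime_subfield \<and> b2 \<in> prime_subfield \<and>
            qnr_prime_subfield k \<and> s ^ 2 = k \<and>
            \<chi> - inverse \<chi> = b1 * s \<and> r + inverse r = b2 * s"
  proof -
    have h1: "(1::'a) \<in> prime_subfield" by (simp add: PS)
    have h2: "e / d \<in> prime_subfield" by (simp add: PS power_divide ep dp)
    have h3: "\<chi> - inverse \<chi> = 1 * d" unfolding d_def by simp
    have h4: "r + inverse r = e / d * d" unfolding e_def using d0 by simp
    have h5: "qnr_prime_subfield (d ^ 2)" unfolding qnr_prime_subfield_def
    proof (intro conjI)
      show "d ^ 2 \<in> prime_subfield"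
        by (simp add: PS power_mult[symmetric] mult.commute[of 2] power_mult dp)
      show "d ^ 2 \<noteq> 0" using d0 by simp
      show "\<not> (\<exists>y\<in>prime_subfield. y ^ 2 = d ^ 2)"
      proof
        assume "\<exists>y\<in>prime_subfield. y ^ 2 = d ^ 2"
        then obtain y where y: "y ^ p = y" "y ^ 2 = d ^ 2" using PS by auto
        hence "y = d \<or> y = - d" by (simp add: power2_eq_iff)
        hence "d ^ p = d" using y(1) neg by auto
        hence "2 * d = 0" using dp by simp
        thus False using two d0 by simp
      qed
    qed
    show ?thesis using h1 h2 h3 h4 h5 by blast
  qed
  have "(c, c / d * e, c / d * f) \<in> triple_set \<chi> r"
    unfolding triple_set_def c_def d_def e_def f_def
    by (rule image_eqI[of _ _ 0]) auto
  moreover have "(c, c / d * e, c / d * f) \<in> prime_subfield \<times> prime_subfield \<times> prime_subfield"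
    by (simp add: PS power_mult_distrib power_divide cpp dp ep fp)
  ultimately show ?thesis using part1 by blast
qed

end
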